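(* Assume the random graph $\mathbf{X}$ is governed by an exponential family with countable support $\mathbb{X}$ that satisfies local dependence, as described in the context. Let $f:\mathbb{X}\times\mathbb{Z}\to\mathbb{R}$ be such that, for each $\mathbf{z}$, $f(\cdot\,;\mathbf{z})$ depends only on the within-neighborhood edge variables $(X_{i,j})_{i<j:\,\mathbf{z}_i=\mathbf{z}_j}$. Assume $f$ is Lipschitz with respect to the Hamming metric $d$ with Lipschitz coefficient $\|f\|_{\mathrm{Lip}}>0$, and that $\mathbb{E}\,f(\mathbf{X};\mathbf{z})<\infty$. Then there exists $c>0$ such that for all $\mathbf{z}\in\mathbb{Z}$, all $n>0$ and all $t>0$, $$\mathbb{P}\left(|f(\mathbf{X};\mathbf{z})-\mathbb{E}\,f(\mathbf{X};\mathbf{z})|\ge t\right) \le 2\exp\left(-\frac{t^2}{c\,K\,n_{\max}(\mathbf{z})^2\,\|\mathscr{A}\|_\infty^4\,\|f\|_{\mathrm{Lip}}^2}\right).$$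
   Context: **Random graph.** Nodes are $\{1,\dots,n\}$. For each $i<j$ there is an undirected edge variable $X_{i,j}$ taking values in a countable set $\mathbb{X}_{i,j}$. Write $\mathbf{X}=(X_{i,j})_{i<j}$ and $\mathbb{X}=\prod_{i<j}\mathbb{X}_{i,j}$. **Exponential family.** The model has $p_{\boldsymbol{\eta}}(\mathbf{x})=\exp(\langle\boldsymbol{\eta},s(\mathbf{x})\rangle-\psi(\boldsymbol{\eta}))$, with the natural parameter $\boldsymbol{\eta}=\boldsymbol{\eta}(\boldsymbol{\theta},\mathbf{z})\in\operatorname{int}(\mathbb{N})$, where $\mathbb{N}=\{\boldsymbol{\eta}:\psi(\boldsymbol{\eta})<\infty\}$. **Neighborhood structures.** A neighborhood structure $\mathbf{z}=(\mathbf{z}_1,\dots,\mathbf{z}_n)\in\mathbb{Z}$ assigns each node to exactly one of $K$ neighborhoods ($z_{i,k}=1$ if node $i$ is in neighborhood $k$, else $0$; $\mathbf{z}_i=\mathbf{z}_j$ means $i$ and $j$ share a neighborhood). $n_{\max}(\mathbf{z})$ is the size of the largest neighborhood under $\mathbf{z}$. **Local dependence.** For every $(\boldsymbol{\theta},\mathbf{z})$, $$p_{\boldsymbol{\eta}(\boldsymbol{\theta},\mathbf{z})}(\mathbf{x})=\prod_{k=1}^K\left[p_{\boldsymbol{\eta}(\boldsymbol{\theta},\mathbf{z})}(\mathbf{x}_{k,k})\prod_{l<k}\prod_{i,j:\,z_{i,k}=1,\,z_{j,l}=1}p_{\boldsymbol{\eta}(\boldsymbol{\theta},\mathbf{z})}(x_{i,j})\right],$$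 where $\mathbf{x}_{k,k}$ is the within-neighborhood subgraph of neighborhood $k$. **Data-generating model.** $\mathbb{P}$ and $\mathbb{E}$ are taken under the data-generating parameter $\boldsymbol{\eta}(\boldsymbol{\theta}^\star,\mathbf{z}^\star)$. The data-generating neighborhoods are $\mathscr{A}_1,\dots,\mathscr{A}_K$, and $\|\mathscr{A}\|_\infty=\max_k|\mathscr{A}_k|$. **Hamming metric and Lipschitz coefficient.** $d(\mathbf{x}_1,\mathbf{x}_2)=\sum_{i<j}\mathbb{1}\{x_{1,i,j}\ne x_{2,i,j}\}$. The Lipschitz coefficient is $$\|f\|_{\mathrm{Lip}}=\sup_{d(\mathbf{x}_1,\mathbf{x}_2)>0}\frac{|f(\mathbf{x}_1;\mathbf{z})-f(\mathbf{x}_2;\mathbf{z})|}{d(\mathbf{x}_1,\mathbf{x}_2)}.$$ *)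

theory Defs
  imports "HOL-Probability.Probability"
begin

text \<open>Nodes are 1..n; edge variables are indexed by pairs (i,j) with 1 <= i < j <= n.
  A graph is a function from edge indices to values, fixed to undefined off the edge set.\<close>

definition edges :: "nat \<Rightarrow> (nat \<times> nat) set" where
  "edges n = {(i, j). 1 \<le> i \<and> i < j \<and> j \<le> n}"

definition sample_space :: "nat \<Rightarrow> (nat \<times> nat \<Rightarrow> 'v set) \<Rightarrow> (nat \<times> nat \<Rightarrow> 'v) set" where
  "sample_space n Xs = PiE (edges n) Xs"

definition hamming :: "nat \<Rightarrow> (nat \<times> nat \<Rightarrow> 'v) \<Rightarrow> (nat \<times> nat \<Rightarrow> 'v) \<Rightarrow> nat" where
  "hamming n x1 x2 = card {e \<in> edges n. x1 e \<noteq> x2 e}"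

definition nbhd_structs :: "nat \<Rightarrow> nat \<Rightarrow> (nat \<Rightarrow> nat) set" where
  "nbhd_structs n K = {z. \<forall>i \<in> {1..n}. z i < K}"

text \<open>Size of the largest neighborhood (n_max(z), and also the norm of the partition).\<close>
definition nmax :: "nat \<Rightarrow> nat \<Rightarrow> (nat \<Rightarrow> nat) \<Rightarrow> nat" where
  "nmax n K z = Max ((\<lambda>k. card {i \<in> {1..n}. z i = k}) ` {..<K})"

definition lip_coeff :: "nat \<Rightarrow> (nat \<times> nat \<Rightarrow> 'v set) \<Rightarrow> ((nat \<times> nat \<Rightarrow> 'v) \<Rightarrow> 'z \<Rightarrow> real) \<Rightarrow> 'z \<Rightarrow> real set" where
  "lip_coeff n Xs f z = {\<bar>f x1 z - f x2 z\<bar> / real (hamming n x1 x2) | x1 x2.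
      x1 \<in> sample_space n Xs \<and> x2 \<in> sample_space n Xs \<and> hamming n x1 x2 > 0}"

definition lip :: "nat \<Rightarrow> (nat \<times> nat \<Rightarrow> 'v set) \<Rightarrow> ((nat \<times> nat \<Rightarrow> 'v) \<Rightarrow> 'z \<Rightarrow> real) \<Rightarrow> 'z \<Rightarrow> real" where
  "lip n Xs f z = Sup (lip_coeff n Xs f z)"

text \<open>Exponential family on the sample space with d-dimensional natural parameter
  (vectors in R^d represented as functions nat => real vanishing from d on),
  with natural parameter in the interior of the natural parameter space.\<close>
definition inner_d :: "nat \<Rightarrow> (nat \<Rightarrow> real) \<Rightarrow> (nat \<Rightarrow> real) \<Rightarrow> real" where
  "inner_d d a b = (\<Sum>k<d. a k * b k)"

definition nat_param_space :: "nat \<Rightarrow> ('x \<Rightarrow> nat \<Rightarrow> real) \<Rightarrow> 'x set \<Rightarrow> (nat \<Rightarrow> real) set" where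
  "nat_param_space d s X = {\<eta>. (\<forall>k\<ge>d. \<eta> k = 0) \<and> (\<lambda>x. exp (inner_d d \<eta> (s x))) summable_on X}"

definition in_interior_d :: "nat \<Rightarrow> (nat \<Rightarrow> real) \<Rightarrow> (nat \<Rightarrow> real) set \<Rightarrow> bool" where
  "in_interior_d d \<eta> N \<longleftrightarrow> (\<exists>\<epsilon>>0. \<forall>\<eta>'. (\<forall>k\<ge>d. \<eta>' k = 0) \<and> (\<forall>k<d. \<bar>\<eta>' k - \<eta> k\<bar> < \<epsilon>) \<longrightarrow> \<eta>' \<in> N)"

definition exp_family :: "('x pmf) \<Rightarrow> 'x set \<Rightarrow> bool" where
  "exp_family p X \<longleftrightarrow> set_pmf p \<subseteq> X \<and>
     (\<exists>d (s :: 'x \<Rightarrow> nat \<Rightarrow> real) \<eta>. (\<forall>k\<ge>d. \<eta> k = 0) \<and>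
        in_interior_d d \<eta> (nat_param_space d s X) \<and>
        (\<forall>x\<in>X. pmf p x = exp (inner_d d \<eta> (s x) -
              ln (infsum (\<lambda>y. exp (inner_d d \<eta> (s y))) X))))"

definition marg :: "((nat \<times> nat \<Rightarrow> 'v) pmf) \<Rightarrow> (nat \<times> nat) set \<Rightarrow> (nat \<times> nat \<Rightarrow> 'v) \<Rightarrow> real" where
  "marg p S x = measure_pmf.prob p {y. \<forall>e\<in>S. y e = x e}"

definition within_edges :: "nat \<Rightarrow> (nat \<Rightarrow> nat) \<Rightarrow> nat \<Rightarrow> (nat \<times> nat) set" where
  "within_edges n zs k = {(i, j) \<in> edges n. zs i = k \<and> zs j = k}"

definition between_edges :: "nat \<Rightarrow> (nat \<Rightarrow> nat) \<Rightarrow> (nat \<times> nat) set" where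
  "between_edges n zs = {(i, j) \<in> edges n. zs i \<noteq> zs j}"

definition local_dependence ::
  "nat \<Rightarrow> nat \<Rightarrow> (nat \<times> nat \<Rightarrow> 'v set) \<Rightarrow> (nat \<Rightarrow> nat) \<Rightarrow> ((nat \<times> nat \<Rightarrow> 'v) pmf) \<Rightarrow> bool" where
  "local_dependence n K Xs zs p \<longleftrightarrow>
     (\<forall>x \<in> sample_space n Xs. pmf p x =
        (\<Prod>k<K. marg p (within_edges n zs k) x) * (\<Prod>e\<in>between_edges n zs. marg p {e} x))"

definition depends_within :: "nat \<Rightarrow> ((nat \<times> nat \<Rightarrow> 'v) \<Rightarrow> (nat \<Rightarrow> nat) \<Rightarrow> real) \<Rightarrow> (nat \<Rightarrow> nat) \<Rightarrow> bool" where
  "depends_within n f z \<longleftrightarrow>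
     (\<forall>x y. (\<forall>(i, j) \<in> edges n. z i = z j \<longrightarrow> x (i, j) = y (i, j)) \<longrightarrow> f x z = f y z)"

end

theory Submission
  imports Defs "HOL-Probability.Probability"
begin

lemma pmf_bounded_integrable:
  fixes f :: "'a \<Rightarrow> real"
  assumes "\<And>x. x \<in> set_pmf p \<Longrightarrow> \<bar>f x\<bar> \<le> B"
  shows "integrable (measure_pmf p) f"
  by (rule measure_pmf.integrable_const_bound[where B=B]) (auto intro!: AE_pmfI assms)

lemma pmf_nn_eq:
  fixes f :: "'a \<Rightarrow> real"
  assumes "\<And>x. x \<in> set_pmf p \<Longrightarrow> 0 \<le> f x" "\<And>x. x \<in> set_pmf p \<Longrightarrow> f x \<le> B"
  shows "(\<integral>\<^sup>+x. ennreal (f x) \<partial>p) = ennreal (measure_pmf.expectation p f)"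
proof -
  have "integrable (measure_pmf p) f"
    by (rule pmf_bounded_integrable[where B=B]) (use assms in force)
  then show ?thesis
    by (intro nn_integral_eq_integral) (auto intro!: AE_pmfI assms)
qed

lemma expectation_pair_bounded:
  fixes F :: "'a \<times> 'b \<Rightarrow> real"
  assumes "\<And>y w. y \<in> set_pmf Q \<Longrightarrow> w \<in> set_pmf P \<Longrightarrow> \<bar>F (y, w)\<bar> \<le> B"
  shows "measure_pmf.expectation (pair_pmf Q P) F
       = measure_pmf.expectation Q (\<lambda>y. measure_pmf.expectation P (\<lambda>w. F (y, w)))"
proof -
  define G where "G = (\<lambda>x. F x + B)"
  have B: "B \<ge> 0" if "y \<in> set_pmf Q" "w \<in> set_pmf P" for y w
    using assms[OF that] by linarith
  have G0: "0 \<le> G x" "G x \<le> 2 * B" if "x \<in> set_pmf (pair_pmf Q P)" for x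
    using that assms[of "fst x" "snd x"] by (auto simp: G_def)
  have intF: "integrable (measure_pmf (pair_pmf Q P)) F"
    by (rule pmf_bounded_integrable[where B=B]) (use assms in force)
  have intFy: "integrable (measure_pmf P) (\<lambda>w. F (y, w))" if "y \<in> set_pmf Q" for y
    by (rule pmf_bounded_integrable[where B=B]) (use assms that in force)
  have Ey: "measure_pmf.expectation P (\<lambda>w. G (y, w)) = measure_pmf.expectation P (\<lambda>w. F (y, w)) + B"
    if "y \<in> set_pmf Q" for y
    using intFy[OF that] by (simp add: G_def Bochner_Integration.integral_add measure_pmf.prob_space)
  have hb: "\<bar>measure_pmf.expectation P (\<lambda>w. F (y, w))\<bar> \<le> B" if "y \<in> set_pmf Q" for y
  proof -
    have "\<bar>measure_pmf.expectation P (\<lambda>w. F (y, w))\<bar> \<le> measure_pmf.expectation P (\<lambda>w. \<bar>F (y, w)\<bar>)"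
      by (rule integral_abs_bound)
    also have "\<dots> \<le> measure_pmf.expectation P (\<lambda>w. B)"
      by (intro integral_mono_AE) (auto intro!: AE_pmfI assms that pmf_bounded_integrable[where B=B])
    finally show ?thesis by (simp add: measure_pmf.prob_space)
  qed
  have inth: "integrable (measure_pmf Q) (\<lambda>y. measure_pmf.expectation P (\<lambda>w. F (y, w)))"
    by (rule pmf_bounded_integrable[where B=B]) (use hb in force)
  have "ennreal (measure_pmf.expectation (pair_pmf Q P) G) = (\<integral>\<^sup>+x. ennreal (G x) \<partial>pair_pmf Q P)"
    by (rule pmf_nn_eq[symmetric, where B="2*B"]) (use G0 in auto)
  also have "\<dots> = (\<integral>\<^sup>+y. \<integral>\<^sup>+w. ennreal (G (y, w)) \<partial>P \<partial>Q)"
    by (rule nn_integral_pair_pmf')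
  also have "\<dots> = (\<integral>\<^sup>+y. ennreal (measure_pmf.expectation P (\<lambda>w. G (y, w))) \<partial>Q)"
    by (intro nn_integral_cong_AE AE_pmfI pmf_nn_eq[where B="2*B"]) (use G0 in auto)
  also have "\<dots> = ennreal (measure_pmf.expectation Q (\<lambda>y. measure_pmf.expectation P (\<lambda>w. G (y, w))))"
  proof (rule pmf_nn_eq[where B="2*B"])
    fix y assume y: "y \<in> set_pmf Q"
    show "0 \<le> measure_pmf.expectation P (\<lambda>w. G (y, w))" using Ey[OF y] hb[OF y] by linarith
    show "measure_pmf.expectation P (\<lambda>w. G (y, w)) \<le> 2 * B" using Ey[OF y] hb[OF y] by linarith
  qed
  finally have eq: "ennreal (measure_pmf.expectation (pair_pmf Q P) G) =
      ennreal (measure_pmf.expectation Q (\<lambda>y. measure_pmf.expectation P (\<lambda>w. G (y, w))))" .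
  have E1: "measure_pmf.expectation (pair_pmf Q P) G = measure_pmf.expectation (pair_pmf Q P) F + B"
    using intF by (simp add: G_def Bochner_Integration.integral_add measure_pmf.prob_space)
  have E2: "measure_pmf.expectation Q (\<lambda>y. measure_pmf.expectation P (\<lambda>w. G (y, w)))
      = measure_pmf.expectation Q (\<lambda>y. measure_pmf.expectation P (\<lambda>w. F (y, w)) + B)"
    by (intro integral_cong_AE) (auto intro!: AE_pmfI simp: Ey)
  also have "\<dots> = measure_pmf.expectation Q (\<lambda>y. measure_pmf.expectation P (\<lambda>w. F (y, w))) + B"
    using inth by (simp add: Bochner_Integration.integral_add measure_pmf.prob_space)
  finally have E2': "measure_pmf.expectation Q (\<lambda>y. measure_pmf.expectation P (\<lambda>w. G (y, w))) = \<dots>" .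
  have nn1: "measure_pmf.expectation (pair_pmf Q P) G \<ge> 0"
    by (intro integral_nonneg_AE AE_pmfI G0)
  have nn2: "measure_pmf.expectation Q (\<lambda>y. measure_pmf.expectation P (\<lambda>w. G (y, w))) \<ge> 0"
  proof (rule integral_nonneg_AE, rule AE_pmfI)
    fix y assume y: "y \<in> set_pmf Q"
    show "0 \<le> measure_pmf.expectation P (\<lambda>w. G (y, w))" using Ey[OF y] hb[OF y] by linarith
  qed
  from eq nn1 nn2 have "measure_pmf.expectation (pair_pmf Q P) G =
      measure_pmf.expectation Q (\<lambda>y. measure_pmf.expectation P (\<lambda>w. G (y, w)))" by simp
  then show ?thesis using E1 E2' by simp
qed

lemma set_Pi_insert_upd:
  assumes "finite J" "j \<notin> J" "w \<in> set_pmf (Pi_pmf J d q)" "y \<in> set_pmf (q j)"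
  shows "w(j:=y) \<in> set_pmf (Pi_pmf (insert j J) d q)"
  using assms by (auto simp: Pi_pmf_insert)

lemma mcd_mgf:
  fixes g :: "('j \<Rightarrow> 'b) \<Rightarrow> real" and c :: "'j \<Rightarrow> real"
  assumes "finite J" "l > 0"
  assumes bnd: "\<And>x. x \<in> set_pmf (Pi_pmf J d q) \<Longrightarrow> \<bar>g x\<bar> \<le> M"
  assumes dif: "\<And>j x y. j \<in> J \<Longrightarrow> x \<in> set_pmf (Pi_pmf J d q) \<Longrightarrow> y \<in> set_pmf (q j) \<Longrightarrow>
                  \<bar>g x - g (x(j:=y))\<bar> \<le> c j"
  shows "(\<integral>\<^sup>+x. ennreal (exp (l * (g x - measure_pmf.expectation (Pi_pmf J d q) g))) \<partial>Pi_pmf J d q)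
           \<le> ennreal (exp (l\<^sup>2 * (\<Sum>j\<in>J. (c j)\<^sup>2) / 2))"
  using assms(1) bnd dif
proof (induction J arbitrary: g rule: finite_induct)
  case empty
  then show ?case by simp
next
  case (insert j J g)
  define P where "P = Pi_pmf J d q"
  define Q where "Q = q j"
  define \<phi> where "\<phi> = (\<lambda>(y::'b, f::'j \<Rightarrow> 'b). f(j:=y))"
  have Pi': "Pi_pmf (insert j J) d q = map_pmf \<phi> (pair_pmf Q P)"
    unfolding P_def Q_def \<phi>_def by (rule Pi_pmf_insert[OF insert.hyps])
  have mem: "w(j:=y) \<in> set_pmf (Pi_pmf (insert j J) d q)" if "w \<in> set_pmf P" "y \<in> set_pmf Q" for w y
    using set_Pi_insert_upd[OF insert.hyps] that by (simp add: P_def Q_def)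
  define h where "h = (\<lambda>y. measure_pmf.expectation P (\<lambda>w. g (w(j:=y))))"
  define \<mu> where "\<mu> = measure_pmf.expectation (Pi_pmf (insert j J) d q) g"
  have \<mu>: "\<mu> = measure_pmf.expectation Q h"
  proof -
    have "\<mu> = measure_pmf.expectation (pair_pmf Q P) (\<lambda>x. g (\<phi> x))"
      unfolding \<mu>_def Pi' by simp
    also have "\<dots> = measure_pmf.expectation Q (\<lambda>y. measure_pmf.expectation P (\<lambda>w. g (\<phi> (y, w))))"
      by (rule expectation_pair_bounded[where B=M]) (auto simp: \<phi>_def intro!: insert.prems(1) mem)
    finally show ?thesis by (simp add: h_def \<phi>_def)
  qed
  obtain y0 where y0: "y0 \<in> set_pmf Q" using set_pmf_not_empty by fastforce
  have hdiff: "\<bar>h y - h y0\<bar> \<le> c j" if y: "y \<in> set_pmf Q" for y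
  proof -
    have i1: "integrable (measure_pmf P) (\<lambda>w. g (w(j:=y')))" if "y' \<in> set_pmf Q" for y'
      by (rule pmf_bounded_integrable[where B=M]) (auto intro!: insert.prems(1) mem that)
    have "h y - h y0 = measure_pmf.expectation P (\<lambda>w. g (w(j:=y)) - g (w(j:=y0)))"
      unfolding h_def using i1[OF y] i1[OF y0] by simp
    also have "\<bar>\<dots>\<bar> \<le> measure_pmf.expectation P (\<lambda>w. \<bar>g (w(j:=y)) - g (w(j:=y0))\<bar>)"
      by (rule integral_abs_bound)
    also have "\<dots> \<le> measure_pmf.expectation P (\<lambda>w. c j)"
    proof (intro integral_mono_AE AE_pmfI)
      fix w assume w: "w \<in> set_pmf P"
      have "\<bar>g (w(j:=y)) - g ((w(j:=y))(j:=y0))\<bar> \<le> c j"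
        by (rule insert.prems(2)[OF _ mem[OF w y]]) (use y0 in \<open>simp_all add: Q_def\<close>)
      then show "\<bar>g (w(j:=y)) - g (w(j:=y0))\<bar> \<le> c j" by simp
    next
      show "integrable (measure_pmf P) (\<lambda>w. \<bar>g (w(j := y)) - g (w(j := y0))\<bar>)"
        using i1[OF y] i1[OF y0] by auto
    qed auto
    finally show ?thesis by (simp add: measure_pmf.prob_space)
  qed
  interpret H: interval_bounded_random_variable "measure_pmf Q" h "h y0 - c j" "h y0 + c j"
    by unfold_locales (auto intro!: AE_pmfI dest!: hdiff)
  have Hoeff: "(\<integral>\<^sup>+y. ennreal (exp (l * (h y - \<mu>))) \<partial>Q) \<le> ennreal (exp (l\<^sup>2 * (c j)\<^sup>2 / 2))"
  proof -
    have "(\<integral>\<^sup>+y. ennreal (exp (l * (h y - \<mu>))) \<partial>Q) \<le> ennreal (exp (l\<^sup>2 * ((h y0 + c j) - (h y0 - c j))\<^sup>2 / 8))"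
      using H.Hoeffdings_lemma_nn_integral[OF assms(2)] by (simp add: \<mu>)
    also have "l\<^sup>2 * ((h y0 + c j) - (h y0 - c j))\<^sup>2 / 8 = l\<^sup>2 * (c j)\<^sup>2 / 2"
      by (simp add: power2_eq_square algebra_simps)
    finally show ?thesis .
  qed
  define S where "S = (\<Sum>k\<in>J. (c k)\<^sup>2)"
  have IH: "(\<integral>\<^sup>+w. ennreal (exp (l * (g (w(j:=y)) - h y))) \<partial>P) \<le> ennreal (exp (l\<^sup>2 * S / 2))"
    if y: "y \<in> set_pmf Q" for y
  proof -
    have "(\<integral>\<^sup>+w. ennreal (exp (l * (g (w(j:=y)) - measure_pmf.expectation (Pi_pmf J d q) (\<lambda>w. g (w(j:=y)))))) \<partial>Pi_pmf J d q)
           \<le> ennreal (exp (l\<^sup>2 * (\<Sum>j\<in>J. (c j)\<^sup>2) / 2))"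
    proof (rule insert.IH)
      fix x assume "x \<in> set_pmf (Pi_pmf J d q)"
      then show "\<bar>g (x(j:=y))\<bar> \<le> M" using insert.prems(1) mem y by (auto simp: P_def)
    next
      fix k x y' assume k: "k \<in> J" and x: "x \<in> set_pmf (Pi_pmf J d q)" and y': "y' \<in> set_pmf (q k)"
      have kj: "k \<noteq> j" using k insert.hyps by auto
      have "\<bar>g (x(j:=y)) - g ((x(j:=y))(k:=y'))\<bar> \<le> c k"
        by (rule insert.prems(2)[OF _ mem[OF _ y]]) (use k x y' in \<open>simp_all add: P_def\<close>)
      moreover have "(x(k:=y'))(j:=y) = (x(j:=y))(k:=y')" using kj by (rule fun_upd_twist)
      ultimately show "\<bar>g (x(j:=y)) - g ((x(k:=y'))(j:=y))\<bar> \<le> c k" by simp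
    qed
    then show ?thesis by (simp add: h_def P_def S_def)
  qed
  have "(\<integral>\<^sup>+x. ennreal (exp (l * (g x - \<mu>))) \<partial>Pi_pmf (insert j J) d q)
      = (\<integral>\<^sup>+y. \<integral>\<^sup>+w. ennreal (exp (l * (g (w(j:=y)) - \<mu>))) \<partial>P \<partial>Q)"
    unfolding Pi' by (simp add: nn_integral_pair_pmf' \<phi>_def)
  also have "\<dots> = (\<integral>\<^sup>+y. ennreal (exp (l * (h y - \<mu>))) * (\<integral>\<^sup>+w. ennreal (exp (l * (g (w(j:=y)) - h y))) \<partial>P) \<partial>Q)"
  proof (intro nn_integral_cong)
    fix y
    have "(\<integral>\<^sup>+w. ennreal (exp (l * (g (w(j:=y)) - \<mu>))) \<partial>P)
        = (\<integral>\<^sup>+w. ennreal (exp (l * (h y - \<mu>))) * ennreal (exp (l * (g (w(j:=y)) - h y))) \<partial>P)"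
      by (intro nn_integral_cong) (simp add: ennreal_mult[symmetric] exp_add[symmetric] algebra_simps)
    also have "\<dots> = ennreal (exp (l * (h y - \<mu>))) * (\<integral>\<^sup>+w. ennreal (exp (l * (g (w(j:=y)) - h y))) \<partial>P)"
      by (rule nn_integral_cmult) simp
    finally show "(\<integral>\<^sup>+w. ennreal (exp (l * (g (w(j:=y)) - \<mu>))) \<partial>P) = \<dots>" .
  qed
  also have "\<dots> \<le> (\<integral>\<^sup>+y. ennreal (exp (l * (h y - \<mu>))) * ennreal (exp (l\<^sup>2 * S / 2)) \<partial>Q)"
    by (intro nn_integral_mono_AE AE_pmfI mult_left_mono IH) auto
  also have "\<dots> = (\<integral>\<^sup>+y. ennreal (exp (l * (h y - \<mu>))) \<partial>Q) * ennreal (exp (l\<^sup>2 * S / 2))"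
    by (rule nn_integral_multc) simp
  also have "\<dots> \<le> ennreal (exp (l\<^sup>2 * (c j)\<^sup>2 / 2)) * ennreal (exp (l\<^sup>2 * S / 2))"
    by (intro mult_right_mono Hoeff) auto
  also have "\<dots> = ennreal (exp (l\<^sup>2 * (\<Sum>k\<in>insert j J. (c k)\<^sup>2) / 2))"
    using insert.hyps by (simp add: S_def ennreal_mult[symmetric] exp_add[symmetric] add_divide_distrib distrib_left)
  finally show ?case by (simp add: \<mu>_def)
qed

lemma mcd_tail:
  fixes g :: "('j \<Rightarrow> 'b) \<Rightarrow> real" and c :: "'j \<Rightarrow> real"
  assumes fin: "finite J" and St: "(\<Sum>j\<in>J. (c j)\<^sup>2) \<le> S" "S > 0" "t > 0"
  assumes bnd: "\<And>x. x \<in> set_pmf (Pi_pmf J d q) \<Longrightarrow> \<bar>g x\<bar> \<le> M"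
  assumes dif: "\<And>j x y. j \<in> J \<Longrightarrow> x \<in> set_pmf (Pi_pmf J d q) \<Longrightarrow> y \<in> set_pmf (q j) \<Longrightarrow>
                  \<bar>g x - g (x(j:=y))\<bar> \<le> c j"
  shows "measure_pmf.prob (Pi_pmf J d q) {x. g x - measure_pmf.expectation (Pi_pmf J d q) g \<ge> t}
           \<le> exp (- (t\<^sup>2 / (2 * S)))"
proof -
  define P where "P = Pi_pmf J d q"
  define \<mu> where "\<mu> = measure_pmf.expectation P g"
  define l where "l = t / S"
  have l: "l > 0" using St by (simp add: l_def)
  define A where "A = {x. g x - \<mu> \<ge> t}"
  have "ennreal (measure_pmf.prob P A) = emeasure (measure_pmf P) A"
    by (simp add: measure_pmf.emeasure_eq_measure)
  also have "\<dots> = (\<integral>\<^sup>+x. indicator A x \<partial>P)" by simp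
  also have "\<dots> \<le> (\<integral>\<^sup>+x. ennreal (exp (- l * t)) * ennreal (exp (l * (g x - \<mu>))) \<partial>P)"
  proof (intro nn_integral_mono)
    fix x
    show "indicator A x \<le> ennreal (exp (- l * t)) * ennreal (exp (l * (g x - \<mu>)))"
    proof (cases "x \<in> A")
      case True
      then have "l * t \<le> l * (g x - \<mu>)" using l by (simp add: A_def)
      then have "1 \<le> exp (- l * t) * exp (l * (g x - \<mu>))"
        by (simp add: exp_add[symmetric])
      then show ?thesis using True by (simp add: ennreal_mult[symmetric])
    qed simp
  qed
  also have "\<dots> = ennreal (exp (- l * t)) * (\<integral>\<^sup>+x. ennreal (exp (l * (g x - \<mu>))) \<partial>P)"
    by (rule nn_integral_cmult) simp
  also have "\<dots> \<le> ennreal (exp (- l * t)) * ennreal (exp (l\<^sup>2 * (\<Sum>j\<in>J. (c j)\<^sup>2) / 2))"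
    unfolding P_def \<mu>_def by (intro mult_left_mono mcd_mgf[OF fin l bnd dif]) auto
  also have "\<dots> \<le> ennreal (exp (- l * t)) * ennreal (exp (l\<^sup>2 * S / 2))"
    using St l by (intro mult_left_mono ennreal_leI) (auto intro!: divide_right_mono mult_left_mono)
  also have "\<dots> = ennreal (exp (- (t\<^sup>2 / (2 * S))))"
  proof -
    have "- l * t + l\<^sup>2 * S / 2 = - (t\<^sup>2 / (2 * S))"
      using St by (simp add: l_def power2_eq_square field_simps)
    then show ?thesis by (simp add: ennreal_mult[symmetric] exp_add[symmetric])
  qed
  finally show ?thesis by (simp add: P_def \<mu>_def A_def)
qed

lemma mcd_two_sided:
  fixes g :: "('j \<Rightarrow> 'b) \<Rightarrow> real" and c :: "'j \<Rightarrow> real"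
  assumes fin: "finite J" and St: "(\<Sum>j\<in>J. (c j)\<^sup>2) \<le> S" "S > 0" "t > 0"
  assumes bnd: "\<And>x. x \<in> set_pmf (Pi_pmf J d q) \<Longrightarrow> \<bar>g x\<bar> \<le> M"
  assumes dif: "\<And>j x y. j \<in> J \<Longrightarrow> x \<in> set_pmf (Pi_pmf J d q) \<Longrightarrow> y \<in> set_pmf (q j) \<Longrightarrow>
                  \<bar>g x - g (x(j:=y))\<bar> \<le> c j"
  shows "measure_pmf.prob (Pi_pmf J d q) {x. \<bar>g x - measure_pmf.expectation (Pi_pmf J d q) g\<bar> \<ge> t}
           \<le> 2 * exp (- (t\<^sup>2 / (2 * S)))"
proof -
  define P where "P = Pi_pmf J d q"
  define \<mu> where "\<mu> = measure_pmf.expectation P g"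
  have 1: "measure_pmf.prob P {x. g x - \<mu> \<ge> t} \<le> exp (- (t\<^sup>2 / (2 * S)))"
    unfolding P_def \<mu>_def by (rule mcd_tail[OF fin St bnd dif])
  have 2: "measure_pmf.prob P {x. (- g x) - measure_pmf.expectation P (\<lambda>x. - g x) \<ge> t} \<le> exp (- (t\<^sup>2 / (2 * S)))"
    unfolding P_def by (rule mcd_tail[OF fin St, where M=M]) (use bnd dif in \<open>force+\<close>)
  have e: "measure_pmf.expectation P (\<lambda>x. - g x) = - \<mu>" by (simp add: \<mu>_def)
  have "{x. \<bar>g x - \<mu>\<bar> \<ge> t} \<subseteq> {x. g x - \<mu> \<ge> t} \<union> {x. (- g x) - measure_pmf.expectation P (\<lambda>x. - g x) \<ge> t}"
    by (auto simp: \<mu>_def abs_if split: if_splits)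
  then have "measure_pmf.prob P {x. \<bar>g x - \<mu>\<bar> \<ge> t} \<le>
      measure_pmf.prob P ({x. g x - \<mu> \<ge> t} \<union> {x. (- g x) - measure_pmf.expectation P (\<lambda>x. - g x) \<ge> t})"
    by (intro measure_pmf.finite_measure_mono) auto
  also have "\<dots> \<le> measure_pmf.prob P {x. g x - \<mu> \<ge> t} + measure_pmf.prob P {x. (- g x) - measure_pmf.expectation P (\<lambda>x. - g x) \<ge> t}"
    by (rule measure_Un_le) auto
  finally show ?thesis using 1 2 by (simp add: P_def \<mu>_def)
qed


definition blk_set :: "nat \<Rightarrow> nat \<Rightarrow> (nat \<Rightarrow> nat) \<Rightarrow> (nat + nat \<times> nat) set" where
  "blk_set n K zs = Inl ` {..<K} \<union> Inr ` between_edges n zs"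

definition blk :: "nat \<Rightarrow> (nat \<Rightarrow> nat) \<Rightarrow> (nat + nat \<times> nat) \<Rightarrow> (nat \<times> nat) set" where
  "blk n zs j = (case j of Inl k \<Rightarrow> within_edges n zs k | Inr e \<Rightarrow> {e})"

definition blk_of :: "nat \<Rightarrow> (nat \<Rightarrow> nat) \<Rightarrow> nat \<times> nat \<Rightarrow> nat + nat \<times> nat" where
  "blk_of n zs e = (if e \<in> between_edges n zs then Inr e else Inl (zs (fst e)))"

definition splitx :: "nat \<Rightarrow> nat \<Rightarrow> (nat \<Rightarrow> nat) \<Rightarrow> (nat \<times> nat \<Rightarrow> 'v) \<Rightarrow> (nat + nat \<times> nat) \<Rightarrow> (nat \<times> nat \<Rightarrow> 'v)" where
  "splitx n K zs x = (\<lambda>j. if j \<in> blk_set n K zs then restrict x (blk n zs j) else (\<lambda>_. undefined))"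

definition mergew :: "nat \<Rightarrow> (nat \<Rightarrow> nat) \<Rightarrow> ((nat + nat \<times> nat) \<Rightarrow> (nat \<times> nat \<Rightarrow> 'v)) \<Rightarrow> (nat \<times> nat \<Rightarrow> 'v)" where
  "mergew n zs w = (\<lambda>e. if e \<in> edges n then w (blk_of n zs e) e else undefined)"

lemma finite_edges: "finite (edges n)"
  by (rule finite_subset[of _ "{1..n} \<times> {1..n}"]) (auto simp: edges_def)

lemma finite_between: "finite (between_edges n zs)"
  by (rule finite_subset[OF _ finite_edges]) (auto simp: between_edges_def)

lemma finite_blk_set: "finite (blk_set n K zs)"
  by (simp add: blk_set_def finite_between)

lemma blk_sub: "blk n zs j \<subseteq> edges n" if "j \<in> blk_set n K zs"
  using that by (auto simp: blk_def blk_set_def within_edges_def between_edges_def)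

lemma blk_of_in:
  assumes "zs \<in> nbhd_structs n K" "e \<in> edges n"
  shows "blk_of n zs e \<in> blk_set n K zs \<and> e \<in> blk n zs (blk_of n zs e)"
proof (cases "e \<in> between_edges n zs")
  case True then show ?thesis by (simp add: blk_of_def blk_set_def blk_def)
next
  case False
  obtain i j where e: "e = (i, j)" by fastforce
  have "zs i = zs j" "1 \<le> i" "i \<le> n" using False assms(2) e by (auto simp: between_edges_def edges_def)
  have "zs i < K" using \<open>1 \<le> i\<close> \<open>i \<le> n\<close> assms(1) by (auto simp: nbhd_structs_def)
  then show ?thesis using False e assms(2) \<open>zs i = zs j\<close>
    by (auto simp: blk_of_def blk_set_def blk_def within_edges_def)
qed

lemma blk_of_eq:
  assumes "j \<in> blk_set n K zs" "e \<in> blk n zs j"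
  shows "blk_of n zs e = j"
  using assms by (auto simp: blk_of_def blk_set_def blk_def within_edges_def between_edges_def)

lemma blk_disj:
  assumes "j \<in> blk_set n K zs" "i \<in> blk_set n K zs" "i \<noteq> j"
  shows "blk n zs i \<inter> blk n zs j = {}"
  using blk_of_eq[OF assms(1)] blk_of_eq[OF assms(2)] assms(3) by blast

lemma merge_split:
  assumes "zs \<in> nbhd_structs n K" "x \<in> sample_space n Xs"
  shows "mergew n zs (splitx n K zs x) = x"
proof
  fix e
  show "mergew n zs (splitx n K zs x) e = x e"
  proof (cases "e \<in> edges n")
    case True
    then show ?thesis using blk_of_in[OF assms(1) True] by (simp add: mergew_def splitx_def)
  next
    case False
    then show ?thesis using assms(2) by (cases e) (simp add: mergew_def sample_space_def PiE_def extensional_def)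
  qed
qed

lemma restrict_eq_iff: "(restrict y A = restrict x A) \<longleftrightarrow> (\<forall>e\<in>A. y e = x e)"
  by (auto simp: fun_eq_iff restrict_def)

definition relv :: "nat \<Rightarrow> (nat \<Rightarrow> nat) \<Rightarrow> (nat \<times> nat) set" where
  "relv n z = {(i, j) \<in> edges n. z i = z j}"

lemma lip_bound:
  assumes "x1 \<in> sample_space n Xs" "x2 \<in> sample_space n Xs" "D \<subseteq> edges n"
    and agree: "\<And>e. e \<in> edges n \<Longrightarrow> e \<notin> D \<Longrightarrow> x1 e = x2 e"
    and dw: "depends_within n f z" and bdd: "bdd_above (lip_coeff n Xs f z)" and lp: "lip n Xs f z > 0"
  shows "\<bar>f x1 z - f x2 z\<bar> \<le> lip n Xs f z * card (D \<inter> relv n z)"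
proof -
  define y where "y = (\<lambda>e. if e \<in> D - relv n z then x1 e else x2 e)"
  have "\<forall>(i,j)\<in>edges n. z i = z j \<longrightarrow> y (i,j) = x2 (i,j)" by (auto simp: y_def relv_def)
  then have fy: "f y z = f x2 z"
    using dw unfolding depends_within_def by blast
  have ys: "y \<in> sample_space n Xs"
    using assms(1,2,3) by (auto simp: y_def sample_space_def PiE_def Pi_def extensional_def)
  have sub: "{e \<in> edges n. x1 e \<noteq> y e} \<subseteq> D \<inter> relv n z"
    using agree by (auto simp: y_def)
  have hc: "hamming n x1 y \<le> card (D \<inter> relv n z)"
    unfolding hamming_def by (rule card_mono) (use finite_subset[OF assms(3) finite_edges] sub in auto)
  show ?thesis
  proof (cases "hamming n x1 y > 0")
    case True
    have "\<bar>f x1 z - f y z\<bar> / real (hamming n x1 y) \<in> lip_coeff n Xs f z"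
      unfolding lip_coeff_def using assms(1) ys True by blast
    then have "\<bar>f x1 z - f y z\<bar> / real (hamming n x1 y) \<le> lip n Xs f z"
      unfolding lip_def by (rule cSup_upper[OF _ bdd])
    then have "\<bar>f x1 z - f y z\<bar> \<le> lip n Xs f z * real (hamming n x1 y)"
      using True by (simp add: divide_le_eq mult.commute)
    also have "\<dots> \<le> lip n Xs f z * card (D \<inter> relv n z)"
      using hc lp by (intro mult_left_mono) auto
    finally show ?thesis using fy by simp
  next
    case False
    then have "{e \<in> edges n. x1 e \<noteq> y e} = {}"
      using finite_edges by (simp add: hamming_def)
    then have "x1 = y"
      using assms(1) ys unfolding sample_space_def by (intro PiE_ext[of x1 "edges n" Xs]) auto
    then show ?thesis using fy lp by simp
  qed
qed

lemma prod_blk: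
  "(\<Prod>j\<in>blk_set n K zs. marg p (blk n zs j) x)
     = (\<Prod>k<K. marg p (within_edges n zs k) x) * (\<Prod>e\<in>between_edges n zs. marg p {e} x)"
proof -
  have "(\<Prod>j\<in>blk_set n K zs. marg p (blk n zs j) x)
      = (\<Prod>j\<in>Inl ` {..<K}. marg p (blk n zs j) x) * (\<Prod>j\<in>Inr ` between_edges n zs. marg p (blk n zs j) x)"
    unfolding blk_set_def by (rule prod.union_disjoint) (auto simp: finite_between)
  also have "(\<Prod>j\<in>Inl ` {..<K}. marg p (blk n zs j) x) = (\<Prod>k<K. marg p (within_edges n zs k) x)"
    by (subst prod.reindex) (auto simp: blk_def)
  also have "(\<Prod>j\<in>Inr ` between_edges n zs. marg p (blk n zs j) x) = (\<Prod>e\<in>between_edges n zs. marg p {e} x)"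
    by (subst prod.reindex) (auto simp: blk_def)
  finally show ?thesis .
qed

lemma pmf_q:
  "pmf (map_pmf (\<lambda>x. restrict x A) p) (restrict x A) = marg p A x"
proof -
  have "(\<lambda>x. restrict x A) -` {restrict x A} = {y. \<forall>e\<in>A. y e = x e}"
    by (auto simp: restrict_eq_iff)
  then show ?thesis by (simp add: pmf_map marg_def)
qed

lemma split_pmf_eq:
  assumes zs: "zs \<in> nbhd_structs n K" and sp: "set_pmf p \<subseteq> sample_space n Xs"
    and ld: "local_dependence n K Xs zs p"
  shows "map_pmf (splitx n K zs) p = Pi_pmf (blk_set n K zs) (\<lambda>_. undefined) (\<lambda>j. map_pmf (\<lambda>x. restrict x (blk n zs j)) p)"
    (is "map_pmf ?s p = Pi_pmf ?J ?d ?q")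
proof (rule pmf_eqI)
  fix w
  have finJ: "finite ?J" by (rule finite_blk_set)
  have inj: "inj_on ?s (sample_space n Xs)"
    by (rule inj_on_inverseI[where g="mergew n zs"]) (rule merge_split[OF zs])
  show "pmf (map_pmf ?s p) w = pmf (Pi_pmf ?J ?d ?q) w"
  proof (cases "\<exists>x \<in> sample_space n Xs. w = ?s x")
    case True
    then obtain x where x: "x \<in> sample_space n Xs" and w: "w = ?s x" by blast
    have lhs: "pmf (map_pmf ?s p) w = pmf p x"
    proof (cases "x \<in> set_pmf p")
      case True
      then show ?thesis unfolding w by (intro pmf_map_inj inj_on_subset[OF inj sp])
    next
      case False
      have "w \<notin> ?s ` set_pmf p"
      proof
        assume "w \<in> ?s ` set_pmf p"
        then obtain y where y1: "y \<in> set_pmf p" and y2: "w = ?s y" by (rule imageE)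
        have "?s y = ?s x" using y2 w by simp
        then have "y = x" using inj x sp y1 by (auto dest: inj_onD)
        then show False using y1 False by blast
      qed
      then show ?thesis using False by (simp add: pmf_map_outside set_pmf_iff)
    qed
    have "pmf (Pi_pmf ?J ?d ?q) w = (\<Prod>j\<in>?J. pmf (?q j) (w j))"
      using finJ by (subst pmf_Pi) (auto simp: w splitx_def)
    also have "\<dots> = (\<Prod>j\<in>?J. marg p (blk n zs j) x)"
      by (intro prod.cong refl) (simp add: w splitx_def pmf_q)
    also have "\<dots> = pmf p x"
      using ld x by (simp add: prod_blk local_dependence_def)
    finally show ?thesis using lhs by simp
  next
    case False
    have lhs: "pmf (map_pmf ?s p) w = 0"
      using False sp by (intro pmf_map_outside) auto
    have "pmf (Pi_pmf ?J ?d ?q) w = 0"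
    proof (rule ccontr)
      assume nz: "pmf (Pi_pmf ?J ?d ?q) w \<noteq> 0"
      then have wJ: "w \<in> set_pmf (Pi_pmf ?J ?d ?q)" by (simp add: set_pmf_iff)
      have outside: "\<And>j. j \<notin> ?J \<Longrightarrow> w j = ?d" using wJ finJ by (auto simp: set_Pi_pmf PiE_dflt_def)
      have "\<forall>j\<in>?J. \<exists>y \<in> set_pmf p. w j = restrict y (blk n zs j)"
        using wJ finJ by (auto simp: set_Pi_pmf PiE_dflt_def)
      then obtain Y where Y: "\<And>j. j \<in> ?J \<Longrightarrow> Y j \<in> set_pmf p \<and> w j = restrict (Y j) (blk n zs j)"
        by metis
      define x where "x = mergew n zs w"
      have xs: "x \<in> sample_space n Xs"
        unfolding sample_space_def
      proof (rule PiE_I)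
        fix e assume e: "e \<in> edges n"
        note b = blk_of_in[OF zs e]
        have "x e = Y (blk_of n zs e) e" using Y[OF conjunct1[OF b]] b e by (simp add: x_def mergew_def)
        moreover have "Y (blk_of n zs e) \<in> sample_space n Xs" using Y[OF conjunct1[OF b]] sp by blast
        ultimately show "x e \<in> Xs e" using e by (auto simp: sample_space_def)
      next
        fix e assume "e \<notin> edges n" then show "x e = undefined" by (simp add: x_def mergew_def)
      qed
      have "?s x = w"
      proof
        fix j show "?s x j = w j"
        proof (cases "j \<in> ?J")
          case True
          show ?thesis
          proof
            fix e show "?s x j e = w j e"
            proof (cases "e \<in> blk n zs j")
              case True
              have "e \<in> edges n" using blk_sub[OF \<open>j \<in> ?J\<close>] True by blast
              then show ?thesis using True \<open>j \<in> ?J\<close> blk_of_eq[OF \<open>j \<in> ?J\<close> True]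
                by (simp add: splitx_def x_def mergew_def)
            next
              case False
              then show ?thesis using \<open>j \<in> ?J\<close> Y[OF \<open>j \<in> ?J\<close>] by (simp add: splitx_def)
            qed
          qed
        next
          case False
          then show ?thesis using outside by (simp add: splitx_def)
        qed
      qed
      then show False using \<open>\<not> (\<exists>x \<in> sample_space n Xs. w = ?s x)\<close> xs by blast
    qed
    then show ?thesis using lhs by simp
  qed
qed


definition cls :: "nat \<Rightarrow> (nat \<Rightarrow> nat) \<Rightarrow> nat \<Rightarrow> nat set" where
  "cls n z k = {i \<in> {1..n}. z i = k}"

lemma card_cls_le: "k < K \<Longrightarrow> card (cls n z k) \<le> nmax n K z"
  unfolding nmax_def cls_def by (rule Max_ge) auto

lemma finite_cls: "finite (cls n z k)"
  by (simp add: cls_def)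

lemma nmax_ge1:
  assumes "n > 0" "z \<in> nbhd_structs n K"
  shows "1 \<le> nmax n K z" "1 \<le> K"
proof -
  have k: "z 1 < K" using assms by (auto simp: nbhd_structs_def)
  have "1 \<in> cls n z (z 1)" using assms by (auto simp: cls_def)
  then have "1 \<le> card (cls n z (z 1))"
    using finite_cls by (metis One_nat_def Suc_leI card_gt_0_iff empty_iff)
  then show "1 \<le> nmax n K z" using card_cls_le[OF k, of n z] by linarith
  show "1 \<le> K" using k by linarith
qed

lemma card_blk:
  assumes "zs \<in> nbhd_structs n K" "n > 0" "j \<in> blk_set n K zs"
  shows "card (blk n zs j) \<le> (nmax n K zs)^2"
proof (cases j)
  case (Inl k)
  then have k: "k < K" using assms(3) by (auto simp: blk_set_def)
  have "blk n zs j \<subseteq> cls n zs k \<times> cls n zs k"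
    using Inl by (auto simp: blk_def within_edges_def edges_def cls_def)
  then have "card (blk n zs j) \<le> card (cls n zs k \<times> cls n zs k)"
    by (intro card_mono) (auto simp: finite_cls)
  also have "\<dots> = card (cls n zs k) * card (cls n zs k)" by (rule card_cartesian_product)
  also have "\<dots> \<le> nmax n K zs * nmax n K zs" using card_cls_le[OF k] by (intro mult_mono) auto
  finally show ?thesis by (simp add: power2_eq_square)
next
  case (Inr e)
  have "1 \<le> nmax n K zs" using nmax_ge1[OF assms(2,1)] by simp
  then have "1 \<le> (nmax n K zs)^2" by simp
  then show ?thesis using Inr by (simp add: blk_def)
qed

lemma card_relv:
  assumes "z \<in> nbhd_structs n K"
  shows "card (relv n z) \<le> K * (nmax n K z)^2"
proof -
  have "relv n z \<subseteq> (\<Union>k\<in>{..<K}. cls n z k \<times> cls n z k)"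
  proof
    fix e assume e: "e \<in> relv n z"
    obtain i j where ij: "e = (i, j)" by fastforce
    have "1 \<le> i" "i \<le> n" "1 \<le> j" "j \<le> n" "z i = z j" using e ij by (auto simp: relv_def edges_def)
    moreover then have "z i < K" using assms by (auto simp: nbhd_structs_def)
    ultimately show "e \<in> (\<Union>k\<in>{..<K}. cls n z k \<times> cls n z k)" using ij by (auto simp: cls_def)
  qed
  then have "card (relv n z) \<le> card (\<Union>k\<in>{..<K}. cls n z k \<times> cls n z k)"
    by (intro card_mono) (auto simp: finite_cls)
  also have "\<dots> \<le> (\<Sum>k<K. card (cls n z k \<times> cls n z k))" by (rule card_UN_le) simp
  also have "\<dots> \<le> (\<Sum>k<K. (nmax n K z)^2)"
  proof (intro sum_mono)
    fix k assume "k \<in> {..<K}"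
    then have "card (cls n z k) \<le> nmax n K z" using card_cls_le by simp
    then show "card (cls n z k \<times> cls n z k) \<le> (nmax n K z)^2"
      by (simp add: card_cartesian_product power2_eq_square mult_mono)
  qed
  finally show ?thesis by simp
qed

lemma sum_blk:
  assumes "finite R"
  shows "(\<Sum>j\<in>blk_set n K zs. card (blk n zs j \<inter> R)) \<le> card R"
proof -
  have "(\<Sum>j\<in>blk_set n K zs. card (blk n zs j \<inter> R)) = card (\<Union>j\<in>blk_set n K zs. blk n zs j \<inter> R)"
  proof (rule card_UN_disjoint[symmetric])
    show "\<forall>i\<in>blk_set n K zs. \<forall>j\<in>blk_set n K zs. i \<noteq> j \<longrightarrow> blk n zs i \<inter> R \<inter> (blk n zs j \<inter> R) = {}"
      using blk_disj[of _ n K zs] by blast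
  qed (use finite_blk_set assms in auto)
  also have "\<dots> \<le> card R" by (rule card_mono[OF assms]) auto
  finally show ?thesis .
qed


lemma main_bound:
  fixes f :: "(nat \<times> nat \<Rightarrow> 'v) \<Rightarrow> (nat \<Rightarrow> nat) \<Rightarrow> real"
  assumes n: "n > 0" and ef: "exp_family p (sample_space n Xs)"
    and zs: "zstar \<in> nbhd_structs n K" and ld: "local_dependence n K Xs zstar p"
    and fz: "depends_within n f z" "bdd_above (lip_coeff n Xs f z)" "lip n Xs f z > 0"
    and z: "z \<in> nbhd_structs n K" and t: "t > 0"
  shows "measure_pmf.prob p {x. \<bar>f x z - measure_pmf.expectation p (\<lambda>y. f y z)\<bar> \<ge> t}
          \<le> 2 * exp (- (t^2 / (2 * real K * real (nmax n K z)^2 * real (nmax n K zstar)^4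
                                  * (lip n Xs f z)^2)))"
proof -
  define L where "L = lip n Xs f z"
  define a where "a = nmax n K z"
  define b where "b = nmax n K zstar"
  define J where "J = blk_set n K zstar"
  define q where "q = (\<lambda>j. map_pmf (\<lambda>x. restrict x (blk n zstar j)) p)"
  define dflt :: "nat \<times> nat \<Rightarrow> 'v" where "dflt = (\<lambda>_. undefined)"
  define P where "P = Pi_pmf J dflt q"
  have finJ: "finite J" by (simp add: J_def finite_blk_set)
  define R where "R = relv n z"
  have sp: "set_pmf p \<subseteq> sample_space n Xs" using ef by (simp add: exp_family_def)
  have Psplit: "P = map_pmf (splitx n K zstar) p"
    unfolding P_def J_def dflt_def q_def by (rule split_pmf_eq[OF zs sp ld, symmetric])
  have peq: "p = map_pmf (mergew n zstar) P"
    unfolding Psplit map_pmf_comp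
    by (rule map_pmf_idI[symmetric]) (use merge_split[OF zs] sp in blast)
  have setP: "set_pmf P = splitx n K zstar ` set_pmf p" by (simp add: Psplit)
  define G where "G = (\<lambda>w. f (mergew n zstar w) z)"
  have Gs: "G (splitx n K zstar x) = f x z" if "x \<in> set_pmf p" for x
  proof -
    have "x \<in> sample_space n Xs" using sp that by blast
    then show ?thesis by (simp add: G_def merge_split[OF zs])
  qed
  obtain x0 where x0: "x0 \<in> set_pmf p" using set_pmf_not_empty by fastforce
  have finR: "finite R" by (rule finite_subset[OF _ finite_edges[of n]]) (auto simp: R_def relv_def)
  have bnd: "\<bar>G w\<bar> \<le> \<bar>f x0 z\<bar> + L * card (edges n)" if "w \<in> set_pmf P" for w
  proof -
    have "w \<in> splitx n K zstar ` set_pmf p" using that setP by simp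
    then obtain x where w: "w = splitx n K zstar x" and x: "x \<in> set_pmf p" by (rule imageE)
    have "\<bar>f x z - f x0 z\<bar> \<le> L * card (edges n \<inter> relv n z)"
      unfolding L_def by (rule lip_bound[OF _ _ _ _ fz]) (use x x0 sp in auto)
    also have "\<dots> \<le> L * card (edges n)"
    proof -
      have "card (edges n \<inter> relv n z) \<le> card (edges n)" by (rule card_mono[OF finite_edges]) auto
      then show ?thesis by (intro mult_left_mono) (use fz(3) in \<open>simp_all add: L_def\<close>)
    qed
    finally show ?thesis using Gs[OF x] w by simp
  qed
  define c where "c = (\<lambda>j. L * card (blk n zstar j \<inter> R))"
  have dif: "\<bar>G w - G (w(j:=y))\<bar> \<le> c j"
    if j: "j \<in> J" and w: "w \<in> set_pmf P" and y: "y \<in> set_pmf (q j)" for j w y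
  proof -
    obtain x where x: "x \<in> set_pmf p" and wx: "w = splitx n K zstar x" using w setP by blast
    obtain x' where x': "x' \<in> set_pmf p" and yx: "y = restrict x' (blk n zstar j)"
      using y by (auto simp: q_def)
    define x'' where "x'' = (\<lambda>e. if e \<in> blk n zstar j then x' e else x e)"
    have bsub: "blk n zstar j \<subseteq> edges n" using blk_sub j by (simp add: J_def)
    have xs: "x \<in> sample_space n Xs" "x' \<in> sample_space n Xs" using x x' sp by auto
    have x''s: "x'' \<in> sample_space n Xs"
      using xs bsub by (auto simp: x''_def sample_space_def PiE_def Pi_def extensional_def)
    have upd: "w(j:=y) = splitx n K zstar x''"
    proof
      fix i show "(w(j:=y)) i = splitx n K zstar x'' i"
      proof (cases "i = j")
        case True
        then show ?thesis using j yx by (auto simp: splitx_def J_def x''_def restrict_def fun_eq_iff)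
      next
        case False
        show ?thesis
        proof (cases "i \<in> J")
          case True
          have "blk n zstar i \<inter> blk n zstar j = {}" using blk_disj True j False by (simp add: J_def)
          then show ?thesis using True False wx
            by (auto simp: splitx_def J_def x''_def restrict_def fun_eq_iff)
        next
          case False
          then show ?thesis using \<open>i \<noteq> j\<close> wx by (simp add: splitx_def J_def)
        qed
      qed
    qed
    have "G (w(j:=y)) = f x'' z"
      using upd merge_split[OF zs x''s] by (simp add: G_def)
    moreover have "G w = f x z" using Gs[OF x] wx by simp
    moreover have "\<bar>f x z - f x'' z\<bar> \<le> L * card (blk n zstar j \<inter> relv n z)"
      unfolding L_def by (rule lip_bound[OF xs(1) x''s bsub _ fz]) (auto simp: x''_def)
    ultimately show ?thesis by (simp add: c_def R_def)
  qed
  have K1: "1 \<le> K" and a1: "1 \<le> a" using nmax_ge1[OF n z] by (auto simp: a_def)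
  have b1: "1 \<le> b" using nmax_ge1[OF n zs] by (auto simp: b_def)
  define S where "S = L^2 * real K * real a^2 * real b^4"
  have Lpos: "L > 0" using fz(3) by (simp add: L_def)
  have Spos: "S > 0" using K1 a1 b1 Lpos by (simp add: S_def)
  have sumc: "(\<Sum>j\<in>J. (c j)\<^sup>2) \<le> S"
  proof -
    have "(\<Sum>j\<in>J. (c j)\<^sup>2) = L^2 * (\<Sum>j\<in>J. real (card (blk n zstar j \<inter> R))^2)"
      by (simp add: c_def power_mult_distrib sum_distrib_left)
    also have "(\<Sum>j\<in>J. real (card (blk n zstar j \<inter> R))^2) \<le> (\<Sum>j\<in>J. real b^2 * real (card (blk n zstar j \<inter> R)))"
    proof (intro sum_mono)
      fix j assume j: "j \<in> J"
      have "card (blk n zstar j \<inter> R) \<le> card (blk n zstar j)"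
        by (intro card_mono) (use finite_subset[OF blk_sub[of j n K zstar] finite_edges] j in \<open>auto simp: J_def\<close>)
      also have "\<dots> \<le> b^2" using card_blk[OF zs n] j by (simp add: J_def b_def)
      finally have "real (card (blk n zstar j \<inter> R)) \<le> real b^2" by (simp flip: of_nat_power)
      then show "real (card (blk n zstar j \<inter> R))^2 \<le> real b^2 * real (card (blk n zstar j \<inter> R))"
        by (simp add: power2_eq_square mult_right_mono)
    qed
    also have "\<dots> = real b^2 * real (\<Sum>j\<in>J. card (blk n zstar j \<inter> R))"
      by (simp add: sum_distrib_left)
    also have "\<dots> \<le> real b^2 * real (card R)"
    proof -
      have "(\<Sum>j\<in>J. card (blk n zstar j \<inter> R)) \<le> card R"
        using sum_blk[OF finR, where n=n and K=K and zs=zstar] by (simp add: J_def)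
      then have "real (\<Sum>j\<in>J. card (blk n zstar j \<inter> R)) \<le> real (card R)" by (simp only: of_nat_le_iff)
      then show ?thesis by (rule mult_left_mono) simp
    qed
    also have "\<dots> \<le> real b^2 * (real K * real a^2)"
    proof -
      have "card R \<le> K * a^2" using card_relv[OF z] by (simp add: R_def a_def)
      then have "real (card R) \<le> real K * real a^2" by (simp flip: of_nat_power of_nat_mult)
      then show ?thesis by (intro mult_left_mono) auto
    qed
    also have "\<dots> \<le> real b^4 * (real K * real a^2)"
    proof -
      have "real b^2 \<le> real b^4" using b1 by (intro power_increasing) auto
      then show ?thesis by (intro mult_right_mono) auto
    qed
    finally show ?thesis using Lpos by (simp add: S_def mult_left_mono mult_ac)
  qed
  have "measure_pmf.prob P {w. \<bar>G w - measure_pmf.expectation P G\<bar> \<ge> t} \<le> 2 * exp (- (t\<^sup>2 / (2 * S)))"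
    unfolding P_def
    by (rule mcd_two_sided[OF finJ sumc Spos t, where M = "\<bar>f x0 z\<bar> + L * card (edges n)"])
       (use bnd dif in \<open>auto simp: P_def\<close>)
  moreover have "measure_pmf.prob p {x. \<bar>f x z - measure_pmf.expectation p (\<lambda>y. f y z)\<bar> \<ge> t}
      = measure_pmf.prob P {w. \<bar>G w - measure_pmf.expectation P G\<bar> \<ge> t}"
    by (subst (1 2) peq) (simp add: measure_map_pmf G_def vimage_def)
  moreover have "2 * S = 2 * real K * real (nmax n K z)^2 * real (nmax n K zstar)^4 * (lip n Xs f z)^2"
    by (simp add: S_def L_def a_def b_def mult_ac)
  ultimately show ?thesis by simp
qed

theorem lemma1:
  shows "\<exists>c>0. \<forall>(n::nat) (K::nat) (Xs :: nat \<times> nat \<Rightarrow> 'v set) zstar p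
           (f :: (nat \<times> nat \<Rightarrow> 'v) \<Rightarrow> (nat \<Rightarrow> nat) \<Rightarrow> real) z t.
      n > 0 \<and>
      (\<forall>e \<in> edges n. countable (Xs e)) \<and>
      exp_family p (sample_space n Xs) \<and>
      zstar \<in> nbhd_structs n K \<and>
      local_dependence n K Xs zstar p \<and>
      (\<forall>z' \<in> nbhd_structs n K. depends_within n f z' \<and>
          bdd_above (lip_coeff n Xs f z') \<and> lip n Xs f z' > 0 \<and>
          integrable (measure_pmf p) (\<lambda>x. f x z')) \<and>
      z \<in> nbhd_structs n K \<and> t > 0
      \<longrightarrow> measure_pmf.prob p
            {x. \<bar>f x z - measure_pmf.expectation p (\<lambda>y. f y z)\<bar> \<ge> t}
          \<le> 2 * exp (- (t^2 / (c * real K * real (nmax n K z)^2 * real (nmax n K zstar)^4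
                                  * (lip n Xs f z)^2)))"
proof (intro exI[of _ "2::real"] conjI allI impI)
  fix n K :: nat and Xs :: "nat \<times> nat \<Rightarrow> 'v set"
    and f :: "(nat \<times> nat \<Rightarrow> 'v) \<Rightarrow> (nat \<Rightarrow> nat) \<Rightarrow> real" and z :: "nat \<Rightarrow> nat" and t :: real
    and zstar :: "nat \<Rightarrow> nat" and p :: "(nat \<times> nat \<Rightarrow> 'v) pmf"
  assume h: "n > 0 \<and>
      (\<forall>e \<in> edges n. countable (Xs e)) \<and>
      exp_family p (sample_space n Xs) \<and>
      zstar \<in> nbhd_structs n K \<and>
      local_dependence n K Xs zstar p \<and>
      (\<forall>z' \<in> nbhd_structs n K. depends_within n f z' \<and>
          bdd_above (lip_coeff n Xs f z') \<and> lip n Xs f z' > 0 \<and>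
          integrable (measure_pmf p) (\<lambda>x. f x z')) \<and>
      z \<in> nbhd_structs n K \<and> t > 0"
  then have zz: "z \<in> nbhd_structs n K" by blast
  show "measure_pmf.prob p
            {x. \<bar>f x z - measure_pmf.expectation p (\<lambda>y. f y z)\<bar> \<ge> t}
          \<le> 2 * exp (- (t^2 / (2 * real K * real (nmax n K z)^2 * real (nmax n K zstar)^4
                                  * (lip n Xs f z)^2)))"
    by (rule main_bound) (use h zz in auto)
qed simp


end
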